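(* Let $G$ be a flag with vertices $v_1,\dots,v_n$ ($n\ge 6$) ordered by increasing $x$-coordinate. Then among $v_1,\dots,v_6$ there is either a separating edge $v_iv_j$ with $i<j\le 6$, or a good upper triplet $(v_i,v_j,v_k)$ with $i<j<k\le 6$, or a good lower triplet $(v_i,v_j,v_k)$ with $i<j<k\le6$.
   Context: Let $\mathcal C=S^1\times\mathbb R$ ($S^1=[0,1]$ with $0\sim1$), points $p=(p_x,p_y)$ with $0\le p_x<1$. A flag is a graph drawn on $\mathcal C$ (vertices distinct points, edges Jordan arcs, no overlapping edges, no edge through a vertex) that is complete, simple (any two edges meet in at most one point: a common endpoint or a proper crossing), monotone (every edge meets each vertical line $l_{x=a}=\{p:p_x=a\}$ at most once, no two vertices share an $x$-coordinate, no vertex has $x$-coordinate $0$), and such that $l_{x=0}$ meets every edge in its relative interior. A point $v$ is related to an $x$-monotone curve $e$ if $l_{x=v_x}$ meets $e$ in its relative interior; then $v$ is below (above) $e$ if $v_y$ is smaller (larger) than the $y$-coordinate of $l_{x=v_x}\cap e$. Two $x$-monotone curves $e,f$ are related if they do not cross, some vertical line meets both relative interiors, and all such lines meet them in the same vertical order; then $e\prec f$ means that on every vertical line meeting both relative interiors, $e$'s point has $y$-coordinate at most that of $f$'s point. For $i<j$, $V^+(v_iv_j)=\{v_s: s>j,\ v_s \text{ above } v_iv_j\}$ and $V^-(v_iv_j)=\{v_s: s>j,\ v_s \text{ below } v_iv_j\}$; $v_iv_j$ is separating if $|V^+(v_iv_j)|>1$ and $|V^-(v_iv_j)|>1$. For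 $i<j<k$, $(v_i,v_j,v_k)$ is a good upper triplet if $v_jv_k\prec v_iv_j$ and $|V^+(v_jv_k)|\le1$, and a good lower triplet if $v_iv_j\prec v_jv_k$ and $|V^-(v_jv_k)|\le1$. *)

theory Defs
  imports Complex_Main
begin

(* Encoding of a flag with n vertices v_1,...,v_n, indexed 1..n in order of
   increasing x-coordinate.  Vertex v_s = (vx s, vy s) with 0 < vx 1 < ... < vx n < 1.
   The edge v_i v_j (i < j) is monotone and crosses l_{x=0}, so it is the graph over
   the circular arc from vx j through 0 to vx i.  We lift this arc to the real
   interval [vx j, 1 + vx i] and represent the edge by a continuous function
   E i j on that interval (the lifted coordinate t corresponds to x = frac t). *)

definition edge_y :: "(nat \<Rightarrow> real) \<Rightarrow> (nat \<Rightarrow> nat \<Rightarrow> real \<Rightarrow> real) \<Rightarrow> nat \<Rightarrow> nat \<Rightarrow> real \<Rightarrow> real" where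
  "edge_y vx E i j x = E i j (if x < vx j then x + 1 else x)"

definition edge_dom :: "(nat \<Rightarrow> real) \<Rightarrow> nat \<Rightarrow> nat \<Rightarrow> real set" where
  "edge_dom vx i j = {x. 0 \<le> x \<and> x < 1 \<and> (x \<le> vx i \<or> vx j \<le> x)}"

definition edge_rint :: "(nat \<Rightarrow> real) \<Rightarrow> nat \<Rightarrow> nat \<Rightarrow> real set" where
  "edge_rint vx i j = {x. 0 \<le> x \<and> x < 1 \<and> (x < vx i \<or> vx j < x)}"

definition crosses_at :: "(nat \<Rightarrow> real) \<Rightarrow> (nat \<Rightarrow> nat \<Rightarrow> real \<Rightarrow> real) \<Rightarrow> nat \<Rightarrow> nat \<Rightarrow> nat \<Rightarrow> nat \<Rightarrow> real \<Rightarrow> bool" where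
  "crosses_at vx E i j k l x \<longleftrightarrow>
     (\<exists>\<delta>>0. (\<forall>s. 0 < s \<and> s < \<delta> \<longrightarrow>
                 edge_y vx E i j (frac (x - s)) < edge_y vx E k l (frac (x - s)) \<and>
                 edge_y vx E i j (frac (x + s)) > edge_y vx E k l (frac (x + s)))
         \<or> (\<forall>s. 0 < s \<and> s < \<delta> \<longrightarrow>
                 edge_y vx E i j (frac (x - s)) > edge_y vx E k l (frac (x - s)) \<and>
                 edge_y vx E i j (frac (x + s)) < edge_y vx E k l (frac (x + s))))"

definition is_flag :: "nat \<Rightarrow> (nat \<Rightarrow> real) \<Rightarrow> (nat \<Rightarrow> real) \<Rightarrow> (nat \<Rightarrow> nat \<Rightarrow> real \<Rightarrow> real) \<Rightarrow> bool" where
  "is_flag n vx vy E \<longleftrightarrow>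
     (\<forall>i \<in> {1..n}. 0 < vx i \<and> vx i < 1) \<and>
     (\<forall>i \<in> {1..n}. \<forall>j \<in> {1..n}. i < j \<longrightarrow> vx i < vx j) \<and>
     (\<forall>i \<in> {1..n}. \<forall>j \<in> {1..n}. i < j \<longrightarrow>
        continuous_on {vx j .. 1 + vx i} (E i j) \<and>
        E i j (vx j) = vy j \<and> E i j (1 + vx i) = vy i) \<and>
     \<comment> \<open>no edge passes through a vertex\<close>
     (\<forall>i \<in> {1..n}. \<forall>j \<in> {1..n}. \<forall>s \<in> {1..n}. i < j \<and> s \<noteq> i \<and> s \<noteq> j \<and>
        vx s \<in> edge_rint vx i j \<longrightarrow> vy s \<noteq> edge_y vx E i j (vx s)) \<and>
     \<comment> \<open>simplicity: two distinct edges meet in at most one point, which is a common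
         endpoint or a proper crossing\<close>
     (\<forall>i \<in> {1..n}. \<forall>j \<in> {1..n}. \<forall>k \<in> {1..n}. \<forall>l \<in> {1..n}.
        i < j \<and> k < l \<and> (i, j) \<noteq> (k, l) \<longrightarrow>
        (\<forall>x x'. x \<in> edge_dom vx i j \<inter> edge_dom vx k l \<and>
                edge_y vx E i j x = edge_y vx E k l x \<and>
                x' \<in> edge_dom vx i j \<inter> edge_dom vx k l \<and>
                edge_y vx E i j x' = edge_y vx E k l x' \<longrightarrow> x = x') \<and>
        (\<forall>x. x \<in> edge_dom vx i j \<inter> edge_dom vx k l \<and>
              edge_y vx E i j x = edge_y vx E k l x \<longrightarrow>
              (\<exists>m \<in> {i, j} \<inter> {k, l}. x = vx m) \<or>
              (x \<in> edge_rint vx i j \<inter> edge_rint vx k l \<and> crosses_at vx E i j k l x)))"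

definition edges_related :: "(nat \<Rightarrow> real) \<Rightarrow> (nat \<Rightarrow> nat \<Rightarrow> real \<Rightarrow> real) \<Rightarrow> nat \<Rightarrow> nat \<Rightarrow> nat \<Rightarrow> nat \<Rightarrow> bool" where
  "edges_related vx E i j k l \<longleftrightarrow>
     \<not> (\<exists>x \<in> edge_rint vx i j \<inter> edge_rint vx k l.
            edge_y vx E i j x = edge_y vx E k l x \<and> crosses_at vx E i j k l x) \<and>
     edge_rint vx i j \<inter> edge_rint vx k l \<noteq> {} \<and>
     ((\<forall>x \<in> edge_rint vx i j \<inter> edge_rint vx k l. edge_y vx E i j x \<le> edge_y vx E k l x) \<or>
      (\<forall>x \<in> edge_rint vx i j \<inter> edge_rint vx k l. edge_y vx E k l x \<le> edge_y vx E i j x))"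

definition edge_prec :: "(nat \<Rightarrow> real) \<Rightarrow> (nat \<Rightarrow> nat \<Rightarrow> real \<Rightarrow> real) \<Rightarrow> nat \<Rightarrow> nat \<Rightarrow> nat \<Rightarrow> nat \<Rightarrow> bool" where
  "edge_prec vx E i j k l \<longleftrightarrow> edges_related vx E i j k l \<and>
     (\<forall>x \<in> edge_rint vx i j \<inter> edge_rint vx k l. edge_y vx E i j x \<le> edge_y vx E k l x)"

definition Vplus :: "nat \<Rightarrow> (nat \<Rightarrow> real) \<Rightarrow> (nat \<Rightarrow> real) \<Rightarrow> (nat \<Rightarrow> nat \<Rightarrow> real \<Rightarrow> real) \<Rightarrow> nat \<Rightarrow> nat \<Rightarrow> nat set" where
  "Vplus n vx vy E i j = {s \<in> {1..n}. j < s \<and> vx s \<in> edge_rint vx i j \<and> vy s > edge_y vx E i j (vx s)}"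

definition Vminus :: "nat \<Rightarrow> (nat \<Rightarrow> real) \<Rightarrow> (nat \<Rightarrow> real) \<Rightarrow> (nat \<Rightarrow> nat \<Rightarrow> real \<Rightarrow> real) \<Rightarrow> nat \<Rightarrow> nat \<Rightarrow> nat set" where
  "Vminus n vx vy E i j = {s \<in> {1..n}. j < s \<and> vx s \<in> edge_rint vx i j \<and> vy s < edge_y vx E i j (vx s)}"

definition separating :: "nat \<Rightarrow> (nat \<Rightarrow> real) \<Rightarrow> (nat \<Rightarrow> real) \<Rightarrow> (nat \<Rightarrow> nat \<Rightarrow> real \<Rightarrow> real) \<Rightarrow> nat \<Rightarrow> nat \<Rightarrow> bool" where
  "separating n vx vy E i j \<longleftrightarrow> card (Vplus n vx vy E i j) > 1 \<and> card (Vminus n vx vy E i j) > 1"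

definition good_upper :: "nat \<Rightarrow> (nat \<Rightarrow> real) \<Rightarrow> (nat \<Rightarrow> real) \<Rightarrow> (nat \<Rightarrow> nat \<Rightarrow> real \<Rightarrow> real) \<Rightarrow> nat \<Rightarrow> nat \<Rightarrow> nat \<Rightarrow> bool" where
  "good_upper n vx vy E i j k \<longleftrightarrow> edge_prec vx E j k i j \<and> card (Vplus n vx vy E j k) \<le> 1"

definition good_lower :: "nat \<Rightarrow> (nat \<Rightarrow> real) \<Rightarrow> (nat \<Rightarrow> real) \<Rightarrow> (nat \<Rightarrow> nat \<Rightarrow> real \<Rightarrow> real) \<Rightarrow> nat \<Rightarrow> nat \<Rightarrow> nat \<Rightarrow> bool" where
  "good_lower n vx vy E i j k \<longleftrightarrow> edge_prec vx E i j j k \<and> card (Vminus n vx vy E j k) \<le> 1"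

end

theory Submission
  imports Defs
begin

lemma sign_left_pos:
  fixes g :: "real \<Rightarrow> real"
  assumes "\<alpha> < \<beta>" "continuous_on {\<alpha>..\<beta>} g" "\<forall>t\<in>{\<alpha><..<\<beta>}. g t \<noteq> 0" "g \<alpha> > 0"
  shows "\<forall>t\<in>{\<alpha>..<\<beta>}. g t > 0"
proof (rule ballI, rule ccontr)
  fix t assume t: "t \<in> {\<alpha>..<\<beta>}" and n: "\<not> 0 < g t"
  have "t \<noteq> \<alpha>" using n assms(4) by auto
  hence ta: "\<alpha> < t" "t < \<beta>" using t by auto
  have c: "continuous_on {\<alpha>..t} g" by (rule continuous_on_subset[OF assms(2)]) (use ta in auto)
  have g1: "g t \<le> 0" using n by simp
  have g2: "0 \<le> g \<alpha>" using assms(4) by simp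
  obtain s where s: "\<alpha> \<le> s" "s \<le> t" "g s = 0"
    using IVT2'[where f=g and a=\<alpha> and b=t and y=0, OF g1 g2 _ c] ta by auto
  have "s \<noteq> \<alpha>" using s assms(4) by auto
  moreover have "g t \<noteq> 0" using assms(3) ta by auto
  hence "s \<noteq> t" using s by auto
  ultimately show False using assms(3) s ta by auto
qed

lemma sign_right_pos:
  fixes g :: "real \<Rightarrow> real"
  assumes "\<alpha> < \<beta>" "continuous_on {\<alpha>..\<beta>} g" "\<forall>t\<in>{\<alpha><..<\<beta>}. g t \<noteq> 0" "g \<beta> > 0"
  shows "\<forall>t\<in>{\<alpha><..\<beta>}. g t > 0"
proof (rule ballI, rule ccontr)
  fix t assume t: "t \<in> {\<alpha><..\<beta>}" and n: "\<not> 0 < g t"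
  have "t \<noteq> \<beta>" using n assms(4) by auto
  hence ta: "\<alpha> < t" "t < \<beta>" using t by auto
  have c: "continuous_on {t..\<beta>} g" by (rule continuous_on_subset[OF assms(2)]) (use ta in auto)
  have g1: "g t \<le> 0" using n by simp
  have g2: "0 \<le> g \<beta>" using assms(4) by simp
  obtain s where s: "t \<le> s" "s \<le> \<beta>" "g s = 0"
    using IVT'[where f=g and a=t and b=\<beta> and y=0, OF g1 g2 _ c] ta by auto
  have "s \<noteq> \<beta>" using s assms(4) by auto
  moreover have "g t \<noteq> 0" using assms(3) ta by auto
  hence "s \<noteq> t" using s by auto
  ultimately show False using assms(3) s ta by auto
qed

lemma sign_left:
  fixes g :: "real \<Rightarrow> real"
  assumes "\<alpha> < \<beta>" "continuous_on {\<alpha>..\<beta>} g" "\<forall>t\<in>{\<alpha><..<\<beta>}. g t \<noteq> 0" "g \<alpha> \<noteq> 0"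
    "t \<in> {\<alpha>..<\<beta>}"
  shows "(g t > 0 \<longleftrightarrow> g \<alpha> > 0) \<and> (g t < 0 \<longleftrightarrow> g \<alpha> < 0)"
proof (cases "g \<alpha> > 0")
  case True
  have "\<forall>t\<in>{\<alpha>..<\<beta>}. 0 < g t" using sign_left_pos[OF assms(1-3) True] .
  then show ?thesis using assms(5) True by force
next
  case False
  hence "(\<lambda>s. - g s) \<alpha> > 0" using assms(4) by auto
  moreover have "continuous_on {\<alpha>..\<beta>} (\<lambda>s. - g s)" using assms(2) by (intro continuous_intros)
  ultimately have "\<forall>t\<in>{\<alpha>..<\<beta>}. - g t > 0" using sign_left_pos[of \<alpha> \<beta> "\<lambda>s. - g s"] assms(1,3) by auto
  then show ?thesis using False assms(5) by force
qed

lemma sign_right: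
  fixes g :: "real \<Rightarrow> real"
  assumes "\<alpha> < \<beta>" "continuous_on {\<alpha>..\<beta>} g" "\<forall>t\<in>{\<alpha><..<\<beta>}. g t \<noteq> 0" "g \<beta> \<noteq> 0"
    "t \<in> {\<alpha><..\<beta>}"
  shows "(g t > 0 \<longleftrightarrow> g \<beta> > 0) \<and> (g t < 0 \<longleftrightarrow> g \<beta> < 0)"
proof (cases "g \<beta> > 0")
  case True
  have "\<forall>t\<in>{\<alpha><..\<beta>}. 0 < g t" using sign_right_pos[OF assms(1-3) True] .
  hence "0 < g t" using assms(5) by blast
  then show ?thesis using True by auto
next
  case False
  hence "(\<lambda>s. - g s) \<beta> > 0" using assms(4) by auto
  moreover have "continuous_on {\<alpha>..\<beta>} (\<lambda>s. - g s)" using assms(2) by (intro continuous_intros)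
  ultimately have "\<forall>t\<in>{\<alpha><..\<beta>}. - g t > 0" using sign_right_pos[of \<alpha> \<beta> "\<lambda>s. - g s"] assms(1,3) by auto
  then show ?thesis using False assms(5) by force
qed

lemma frac_lt1: "0 \<le> t \<Longrightarrow> t < 1 \<Longrightarrow> frac t = (t::real)"
  by (simp add: frac_eq)

lemma frac_ge1: "1 \<le> t \<Longrightarrow> t < 2 \<Longrightarrow> frac t = (t::real) - 1"
proof -
  assume "1 \<le> t" "t < 2"
  hence "\<lfloor>t\<rfloor> = 1" by (simp add: floor_eq_iff)
  thus ?thesis by (simp add: frac_def)
qed

lemma ivt0:
  fixes h :: "real \<Rightarrow> real"
  assumes "\<alpha> < \<beta>" "continuous_on {\<alpha>..\<beta>} h" "h \<alpha> * h \<beta> < 0"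
  shows "\<exists>x\<in>{\<alpha><..<\<beta>}. h x = 0"
proof (cases "h \<alpha> < 0")
  case True
  hence hb: "h \<beta> > 0" using assms(3) by (simp add: mult_less_0_iff)
  obtain x where x: "\<alpha> \<le> x" "x \<le> \<beta>" "h x = 0"
    using IVT'[where f=h and a=\<alpha> and b=\<beta> and y=0, OF _ _ _ assms(2)] True hb assms(1) by auto
  have "x \<noteq> \<alpha>" "x \<noteq> \<beta>" using x True hb by auto
  thus ?thesis using x by auto
next
  case False
  hence ha: "h \<alpha> > 0" "h \<beta> < 0" using assms(3) by (auto simp add: mult_less_0_iff)
  obtain x where x: "\<alpha> \<le> x" "x \<le> \<beta>" "h x = 0"
    using IVT2'[where f=h and a=\<alpha> and b=\<beta> and y=0, OF _ _ _ assms(2)] ha assms(1) by auto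
  have "x \<noteq> \<alpha>" "x \<noteq> \<beta>" using x ha by auto
  thus ?thesis using x by auto
qed

locale flag =
  fixes n :: nat and vx vy :: "nat \<Rightarrow> real" and E :: "nat \<Rightarrow> nat \<Rightarrow> real \<Rightarrow> real"
  assumes F: "is_flag n vx vy E"
begin

lemma F1: "\<forall>i \<in> {1..n}. 0 < vx i \<and> vx i < 1"
  using F[unfolded is_flag_def] by (rule conjunct1)
lemma F2: "\<forall>i \<in> {1..n}. \<forall>j \<in> {1..n}. i < j \<longrightarrow> vx i < vx j"
  using F[unfolded is_flag_def] by (elim conjE)
lemma F3: "\<forall>i \<in> {1..n}. \<forall>j \<in> {1..n}. i < j \<longrightarrow>
        continuous_on {vx j .. 1 + vx i} (E i j) \<and>
        E i j (vx j) = vy j \<and> E i j (1 + vx i) = vy i"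
  using F[unfolded is_flag_def] by (elim conjE)
lemma F4: "\<forall>i \<in> {1..n}. \<forall>j \<in> {1..n}. \<forall>s \<in> {1..n}. i < j \<and> s \<noteq> i \<and> s \<noteq> j \<and>
        vx s \<in> edge_rint vx i j \<longrightarrow> vy s \<noteq> edge_y vx E i j (vx s)"
  using F[unfolded is_flag_def] by (elim conjE)
lemma F5: "\<forall>i \<in> {1..n}. \<forall>j \<in> {1..n}. \<forall>k \<in> {1..n}. \<forall>l \<in> {1..n}.
        i < j \<and> k < l \<and> (i, j) \<noteq> (k, l) \<longrightarrow>
        (\<forall>x x'. x \<in> edge_dom vx i j \<inter> edge_dom vx k l \<and>
                edge_y vx E i j x = edge_y vx E k l x \<and>
                x' \<in> edge_dom vx i j \<inter> edge_dom vx k l \<and>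
                edge_y vx E i j x' = edge_y vx E k l x' \<longrightarrow> x = x')"
proof -
  have h: "\<forall>i \<in> {1..n}. \<forall>j \<in> {1..n}. \<forall>k \<in> {1..n}. \<forall>l \<in> {1..n}.
        i < j \<and> k < l \<and> (i, j) \<noteq> (k, l) \<longrightarrow>
        (\<forall>x x'. x \<in> edge_dom vx i j \<inter> edge_dom vx k l \<and>
                edge_y vx E i j x = edge_y vx E k l x \<and>
                x' \<in> edge_dom vx i j \<inter> edge_dom vx k l \<and>
                edge_y vx E i j x' = edge_y vx E k l x' \<longrightarrow> x = x') \<and>
        (\<forall>x. x \<in> edge_dom vx i j \<inter> edge_dom vx k l \<and>
              edge_y vx E i j x = edge_y vx E k l x \<longrightarrow>
              (\<exists>m \<in> {i, j} \<inter> {k, l}. x = vx m) \<or>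
              (x \<in> edge_rint vx i j \<inter> edge_rint vx k l \<and> crosses_at vx E i j k l x))"
    using F[unfolded is_flag_def] by (elim conjE)
  show ?thesis
  proof (intro ballI impI)
    fix i j k l assume "i \<in> {1..n}" "j \<in> {1..n}" "k \<in> {1..n}" "l \<in> {1..n}" "i < j \<and> k < l \<and> (i, j) \<noteq> (k, l)"
    thus "\<forall>x x'. x \<in> edge_dom vx i j \<inter> edge_dom vx k l \<and>
                edge_y vx E i j x = edge_y vx E k l x \<and>
                x' \<in> edge_dom vx i j \<inter> edge_dom vx k l \<and>
                edge_y vx E i j x' = edge_y vx E k l x' \<longrightarrow> x = x'"
      using h by (meson conjunct1)
  qed
qed

lemma pos: "1 \<le> i \<Longrightarrow> i \<le> n \<Longrightarrow> 0 < vx i \<and> vx i < 1"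
  using F1 by auto

lemma mono: "1 \<le> i \<Longrightarrow> i < j \<Longrightarrow> j \<le> n \<Longrightarrow> vx i < vx j"
  using F2 by auto

lemma cont: "1 \<le> i \<Longrightarrow> i < j \<Longrightarrow> j \<le> n \<Longrightarrow> continuous_on {vx j .. 1 + vx i} (E i j)"
  using F3 by auto

lemma endj: "1 \<le> i \<Longrightarrow> i < j \<Longrightarrow> j \<le> n \<Longrightarrow> E i j (vx j) = vy j"
  using F3 by auto

lemma endi: "1 \<le> i \<Longrightarrow> i < j \<Longrightarrow> j \<le> n \<Longrightarrow> E i j (1 + vx i) = vy i"
  using F3 by auto

lemma nothrough: "1 \<le> i \<Longrightarrow> i < j \<Longrightarrow> j \<le> n \<Longrightarrow> 1 \<le> s \<Longrightarrow> s \<le> n \<Longrightarrow> s \<noteq> i \<Longrightarrow> s \<noteq> j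
   \<Longrightarrow> vx s \<in> edge_rint vx i j \<Longrightarrow> vy s \<noteq> edge_y vx E i j (vx s)"
proof -
  assume a: "1 \<le> i" "i < j" "j \<le> n" "1 \<le> s" "s \<le> n" "s \<noteq> i" "s \<noteq> j" "vx s \<in> edge_rint vx i j"
  have m: "i \<in> {1..n}" "j \<in> {1..n}" "s \<in> {1..n}" using a by auto
  show ?thesis using F4 m a(2,6,7,8) by blast
qed

lemma simple: "1 \<le> i \<Longrightarrow> i < j \<Longrightarrow> j \<le> n \<Longrightarrow> 1 \<le> k \<Longrightarrow> k < l \<Longrightarrow> l \<le> n \<Longrightarrow> (i,j) \<noteq> (k,l)
  \<Longrightarrow> x \<in> edge_dom vx i j \<Longrightarrow> x \<in> edge_dom vx k l \<Longrightarrow> edge_y vx E i j x = edge_y vx E k l x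
  \<Longrightarrow> x' \<in> edge_dom vx i j \<Longrightarrow> x' \<in> edge_dom vx k l \<Longrightarrow> edge_y vx E i j x' = edge_y vx E k l x'
  \<Longrightarrow> x = x'"
proof -
  assume a: "1 \<le> i" "i < j" "j \<le> n" "1 \<le> k" "k < l" "l \<le> n" "(i,j) \<noteq> (k,l)"
    "x \<in> edge_dom vx i j" "x \<in> edge_dom vx k l" "edge_y vx E i j x = edge_y vx E k l x"
    "x' \<in> edge_dom vx i j" "x' \<in> edge_dom vx k l" "edge_y vx E i j x' = edge_y vx E k l x'"
  have m: "i \<in> {1..n}" "j \<in> {1..n}" "k \<in> {1..n}" "l \<in> {1..n}" using a by auto
  have "\<forall>x x'. x \<in> edge_dom vx i j \<inter> edge_dom vx k l \<and>
                edge_y vx E i j x = edge_y vx E k l x \<and>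
                x' \<in> edge_dom vx i j \<inter> edge_dom vx k l \<and>
                edge_y vx E i j x' = edge_y vx E k l x' \<longrightarrow> x = x'"
    using F5 m a(2,5,7) by blast
  thus ?thesis using a(8-13) by blast
qed

lemma lift:
  assumes "1 \<le> i" "i < j" "j \<le> n" "vx j \<le> t" "t \<le> 1 + vx i"
  shows "frac t \<in> edge_dom vx i j" "edge_y vx E i j (frac t) = E i j t"
    "t < 1 \<Longrightarrow> frac t = t" "1 \<le> t \<Longrightarrow> frac t = t - 1"
proof -
  have pi: "0 < vx i" "vx i < 1" using pos assms by auto
  have pj: "0 < vx j" "vx j < 1" using pos assms by auto
  have ij: "vx i < vx j" using mono assms by auto
  show "t < 1 \<Longrightarrow> frac t = t" using frac_lt1 pj assms by auto
  show "1 \<le> t \<Longrightarrow> frac t = t - 1" using frac_ge1 pi assms by auto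
  show "frac t \<in> edge_dom vx i j" "edge_y vx E i j (frac t) = E i j t"
  proof -
    have "(frac t \<in> edge_dom vx i j) \<and> edge_y vx E i j (frac t) = E i j t"
    proof (cases "t < 1")
      case True
      hence "frac t = t" using frac_lt1 pj assms by auto
      thus ?thesis using True assms pj unfolding edge_dom_def edge_y_def by auto
    next
      case False
      hence "frac t = t - 1" using frac_ge1 pi assms by auto
      thus ?thesis using False assms pi ij unfolding edge_dom_def edge_y_def by auto
    qed
    thus "frac t \<in> edge_dom vx i j" "edge_y vx E i j (frac t) = E i j t" by auto
  qed
qed

lemma lift_open:
  assumes "1 \<le> i" "i < j" "j \<le> n" "vx j < t" "t < 1 + vx i"
  shows "frac t \<in> edge_rint vx i j"
proof -
  have pi: "0 < vx i" "vx i < 1" using pos assms by auto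
  have pj: "0 < vx j" "vx j < 1" using pos assms by auto
  show ?thesis
  proof (cases "t < 1")
    case True
    hence "frac t = t" using frac_lt1 pj assms by auto
    thus ?thesis using True assms pj unfolding edge_rint_def by auto
  next
    case False
    hence "frac t = t - 1" using frac_ge1 pi assms by auto
    thus ?thesis using False assms pi unfolding edge_rint_def by auto
  qed
qed

lemma vert:
  assumes "1 \<le> i" "i < j" "j \<le> n"
  shows "vx i \<in> edge_dom vx i j" "vx j \<in> edge_dom vx i j"
    "edge_y vx E i j (vx i) = vy i" "edge_y vx E i j (vx j) = vy j"
proof -
  have pi: "0 < vx i" "vx i < 1" using pos assms by auto
  have pj: "0 < vx j" "vx j < 1" using pos assms by auto
  have ij: "vx i < vx j" using mono assms by auto
  show "vx i \<in> edge_dom vx i j" "vx j \<in> edge_dom vx i j" using pi pj unfolding edge_dom_def by auto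
  show "edge_y vx E i j (vx i) = vy i" using ij endi[OF assms] unfolding edge_y_def by (simp add: add.commute)
  show "edge_y vx E i j (vx j) = vy j" using endj[OF assms] unfolding edge_y_def by simp
qed

lemma share_ne:
  assumes "1 \<le> i" "i < j" "j \<le> n" "1 \<le> k" "k < l" "l \<le> n" "(i,j) \<noteq> (k,l)"
    "m \<in> {i,j}" "m \<in> {k,l}" "vx j < t" "t < 1 + vx i" "vx l \<le> t" "t \<le> 1 + vx k"
  shows "E i j t \<noteq> E k l t"
proof
  assume eq: "E i j t = E k l t"
  have l1: "frac t \<in> edge_dom vx i j" "edge_y vx E i j (frac t) = E i j t"
    using lift[OF assms(1-3)] assms(10,11) by auto
  have l2: "frac t \<in> edge_dom vx k l" "edge_y vx E k l (frac t) = E k l t"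
    using lift[OF assms(4-6) assms(12,13)] by auto
  have m1: "vx m \<in> edge_dom vx i j" "edge_y vx E i j (vx m) = vy m"
    using vert[OF assms(1-3)] assms(8) by auto
  have m2: "vx m \<in> edge_dom vx k l" "edge_y vx E k l (vx m) = vy m"
    using vert[OF assms(4-6)] assms(9) by auto
  have "frac t = vx m"
    using simple[OF assms(1-7) l1(1) l2(1) _ m1(1) m2(1)] l1(2) l2(2) m1(2) m2(2) eq by simp
  moreover have "frac t \<in> edge_rint vx i j" using lift_open[OF assms(1-3) assms(10,11)] .
  moreover have "vx i < vx j" using mono assms by auto
  ultimately show False using assms(8) unfolding edge_rint_def by auto
qed

definition R :: "nat \<Rightarrow> nat \<Rightarrow> nat \<Rightarrow> bool" where
  "R i j k \<longleftrightarrow> vy k < edge_y vx E i j (vx k)"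

lemma R_ne:
  assumes "1 \<le> i" "i < j" "j < k" "k \<le> n"
  shows "vy k \<noteq> E i j (vx k)" "R i j k \<longleftrightarrow> vy k < E i j (vx k)" "\<not> R i j k \<longleftrightarrow> vy k > E i j (vx k)"
proof -
  have jk: "vx j < vx k" using mono assms by auto
  have pk: "0 < vx k" "vx k < 1" using pos assms by auto
  have ey: "edge_y vx E i j (vx k) = E i j (vx k)" using jk unfolding edge_y_def by auto
  have "vx k \<in> edge_rint vx i j" using jk pk unfolding edge_rint_def by auto
  hence "vy k \<noteq> edge_y vx E i j (vx k)" using nothrough[of i j k] assms by auto
  thus "vy k \<noteq> E i j (vx k)" using ey by simp
  thus "R i j k \<longleftrightarrow> vy k < E i j (vx k)" "\<not> R i j k \<longleftrightarrow> vy k > E i j (vx k)"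
    unfolding R_def ey by auto
qed

lemma end_ne:
  assumes "1 \<le> a" "a < b" "b < c" "c \<le> n"
  shows "E b c (1 + vx a) \<noteq> vy a"
proof -
  have ab: "vx a < vx b" using mono assms by auto
  have pa: "0 < vx a" "vx a < 1" using pos assms by auto
  have ey: "edge_y vx E b c (vx a) = E b c (1 + vx a)" using ab unfolding edge_y_def
    using mono[of b c] assms by (auto simp: add.commute)
  have "vx a \<in> edge_rint vx b c" using ab pa unfolding edge_rint_def by auto
  hence "vy a \<noteq> edge_y vx E b c (vx a)" using nothrough[of b c a] assms by auto
  thus ?thesis using ey by simp
qed

lemma contsub: "1 \<le> i \<Longrightarrow> i < j \<Longrightarrow> j \<le> n \<Longrightarrow> vx j \<le> \<alpha> \<Longrightarrow> \<beta> \<le> 1 + vx i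
  \<Longrightarrow> continuous_on {\<alpha>..\<beta>} (E i j)"
  by (rule continuous_on_subset[OF cont]) auto

lemma contdiff: "1 \<le> i \<Longrightarrow> i < j \<Longrightarrow> j \<le> n \<Longrightarrow> vx j \<le> \<alpha> \<Longrightarrow> \<beta> \<le> 1 + vx i
  \<Longrightarrow> 1 \<le> k \<Longrightarrow> k < l \<Longrightarrow> l \<le> n \<Longrightarrow> vx l \<le> \<alpha> \<Longrightarrow> \<beta> \<le> 1 + vx k
  \<Longrightarrow> continuous_on {\<alpha>..\<beta>} (\<lambda>s. E i j s - E k l s)"
  by (intro continuous_on_diff contsub) auto

lemma sortR:
  assumes "1 \<le> a" "a < b" "b < c" "c \<le> n" "vx c < t" "t < 1 + vx a"
  shows "(R a b c \<longrightarrow> E b c t < E a c t \<and> E a c t < E a b t) \<and>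
         (\<not> R a b c \<longrightarrow> E a b t < E a c t \<and> E a c t < E b c t)"
proof -
  have pa: "0 < vx a" "vx a < 1" using pos assms by auto
  have ab: "vx a < vx b" and bc: "vx b < vx c" using mono assms by auto
  have pc: "vx c < 1" using pos assms by auto
  have lt: "vx c < 1 + vx a" using pa pc by auto
  define g1 where "g1 = (\<lambda>s. E a b s - E b c s)"
  define g2 where "g2 = (\<lambda>s. E a b s - E a c s)"
  define g3 where "g3 = (\<lambda>s. E a c s - E b c s)"
  have c1: "continuous_on {vx c..1 + vx a} g1" unfolding g1_def
    by (rule contdiff) (use assms ab bc pa in auto)
  have c2: "continuous_on {vx c..1 + vx a} g2" unfolding g2_def
    by (rule contdiff) (use assms ab bc pa in auto)
  have c3: "continuous_on {vx c..1 + vx a} g3" unfolding g3_def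
    by (rule contdiff) (use assms ab bc pa in auto)
  have n1: "\<forall>s\<in>{vx c<..<1 + vx a}. g1 s \<noteq> 0" unfolding g1_def
  proof
    fix s assume s: "s \<in> {vx c<..<1 + vx a}"
    show "E a b s - E b c s \<noteq> 0" using share_ne[of a b b c b s] assms s ab bc pa by auto
  qed
  have n2: "\<forall>s\<in>{vx c<..<1 + vx a}. g2 s \<noteq> 0" unfolding g2_def
  proof
    fix s assume s: "s \<in> {vx c<..<1 + vx a}"
    show "E a b s - E a c s \<noteq> 0" using share_ne[of a b a c a s] assms s ab bc pa by auto
  qed
  have n3: "\<forall>s\<in>{vx c<..<1 + vx a}. g3 s \<noteq> 0" unfolding g3_def
  proof
    fix s assume s: "s \<in> {vx c<..<1 + vx a}"
    show "E a c s - E b c s \<noteq> 0" using share_ne[of a c b c c s] assms s ab bc pa by auto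
  qed
  have ec: "E b c (vx c) = vy c" "E a c (vx c) = vy c" using endj assms by auto
  have ea: "E a b (1 + vx a) = vy a" "E a c (1 + vx a) = vy a" using endi assms by auto
  have l1: "g1 (vx c) \<noteq> 0" using R_ne(1)[of a b c] assms ec unfolding g1_def by auto
  have r1: "g1 (1 + vx a) \<noteq> 0" using end_ne[of a b c] assms ea unfolding g1_def by auto
  have g12: "g2 (vx c) = g1 (vx c)" using ec unfolding g1_def g2_def by simp
  have g13: "g3 (1 + vx a) = g1 (1 + vx a)" using ea unfolding g1_def g3_def by simp
  have t1: "t \<in> {vx c..<1 + vx a}" "t \<in> {vx c<..1 + vx a}" using assms by auto
  have s1l: "(g1 t > 0 \<longleftrightarrow> g1 (vx c) > 0) \<and> (g1 t < 0 \<longleftrightarrow> g1 (vx c) < 0)"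
    using sign_left[OF lt c1 n1 l1 t1(1)] .
  have s1r: "(g1 t > 0 \<longleftrightarrow> g1 (1 + vx a) > 0) \<and> (g1 t < 0 \<longleftrightarrow> g1 (1 + vx a) < 0)"
    using sign_right[OF lt c1 n1 r1 t1(2)] .
  have s2: "(g2 t > 0 \<longleftrightarrow> g2 (vx c) > 0) \<and> (g2 t < 0 \<longleftrightarrow> g2 (vx c) < 0)"
    using sign_left[OF lt c2 n2 _ t1(1)] l1 g12 by auto
  have s3: "(g3 t > 0 \<longleftrightarrow> g3 (1 + vx a) > 0) \<and> (g3 t < 0 \<longleftrightarrow> g3 (1 + vx a) < 0)"
    using sign_right[OF lt c3 n3 _ t1(2)] r1 g13 by auto
  have RR: "R a b c \<longleftrightarrow> g1 (vx c) > 0" using R_ne(2)[of a b c] assms ec unfolding g1_def by auto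
  show ?thesis
  proof (cases "R a b c")
    case True
    hence "g1 (vx c) > 0" using RR by auto
    hence "g2 t > 0" "g3 t > 0" using s1l s1r s2 s3 g12 g13 by auto
    thus ?thesis using True unfolding g2_def g3_def by auto
  next
    case False
    hence "g1 (vx c) < 0" using RR l1 by auto
    hence "g2 t < 0" "g3 t < 0" using s1l s1r s2 s3 g12 g13 by auto
    thus ?thesis using False unfolding g2_def g3_def by auto
  qed
qed

lemma two_cross:
  assumes "1 \<le> a" "a < b" "b < c" "c < d" "d \<le> n"
    and H1: "(vy b - E c d (1 + vx b)) * (E a b (vx c) - vy c) < 0"
    and H2: "(E a b (vx d) - vy d) * (vy a - E c d (1 + vx a)) < 0"
  shows False
proof -
  have pa: "0 < vx a" "vx a < 1" using pos assms by auto
  have pd: "0 < vx d" "vx d < 1" using pos assms by auto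
  have ab: "vx a < vx b" and bc: "vx b < vx c" and cd: "vx c < vx d" using mono assms by auto
  define h where "h = (\<lambda>x. E a b x - E c d (x + 1))"
  have pc: "vx c < 1" using pos assms by auto
  have ch1: "continuous_on {vx b..vx c} (E a b)" by (rule contsub) (use assms ab bc pa pc in auto)
  have pb: "0 < vx b" using pos assms by auto
  have ch2: "continuous_on {1 + vx b..1 + vx c} (E c d)" by (rule contsub) (use assms ab bc pd pb in auto)
  have ch3: "continuous_on {vx b..vx c} (\<lambda>x. E c d (x + 1))"
    by (rule continuous_on_compose2[OF ch2]) (auto intro!: continuous_intros)
  have ch: "continuous_on {vx b..vx c} h" unfolding h_def by (intro continuous_on_diff ch1 ch3)
  have hb: "h (vx b) = vy b - E c d (1 + vx b)" using endj[of a b] assms unfolding h_def by (simp add: add.commute)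
  have hc: "h (vx c) = E a b (vx c) - vy c" using endi[of c d] assms unfolding h_def by (simp add: add.commute)
  obtain x1 where x1: "x1 \<in> {vx b<..<vx c}" "h x1 = 0" using ivt0[OF bc ch] H1 hb hc by auto
  have x1d: "x1 \<in> edge_dom vx a b" "x1 \<in> edge_dom vx c d" using x1 pa pd ab bc cd unfolding edge_dom_def by auto
  have x1y: "edge_y vx E a b x1 = edge_y vx E c d x1" using x1 ab bc cd unfolding edge_y_def h_def by auto
  define h2 where "h2 = (\<lambda>s. E a b s - E c d s)"
  have lt: "vx d < 1 + vx a" using pa pd by auto
  have ch4: "continuous_on {vx d..1 + vx a} h2" unfolding h2_def
    by (rule contdiff) (use assms ab bc cd pa in auto)
  have h2d: "h2 (vx d) = E a b (vx d) - vy d" using endj[of c d] assms unfolding h2_def by simp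
  have h2a: "h2 (1 + vx a) = vy a - E c d (1 + vx a)" using endi[of a b] assms unfolding h2_def by simp
  obtain t2 where t2: "t2 \<in> {vx d<..<1 + vx a}" "h2 t2 = 0" using ivt0[OF lt ch4] H2 h2d h2a by auto
  have la: "frac t2 \<in> edge_dom vx a b" "edge_y vx E a b (frac t2) = E a b t2"
    using lift[of a b t2] assms t2 ab bc cd by auto
  have lc: "frac t2 \<in> edge_dom vx c d" "edge_y vx E c d (frac t2) = E c d t2"
    using lift[of c d t2] assms t2 ab bc cd by auto
  have "x1 = frac t2"
    using simple[of a b c d x1 "frac t2"] assms x1d x1y la lc t2(2) unfolding h2_def by auto
  moreover have "frac t2 > vx d \<or> frac t2 < vx a"
  proof (cases "t2 < 1")
    case True
    thus ?thesis using frac_lt1[of t2] t2 pd by auto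
  next
    case False
    thus ?thesis using frac_ge1[of t2] t2 pa by auto
  qed
  ultimately show False using x1 ab bc cd by auto
qed

lemma A1:
  assumes "1 \<le> a" "a < b" "b < c" "c < d" "d \<le> n"
  shows "R a b d \<longleftrightarrow> R a c d"
proof -
  have pa: "0 < vx a" "vx a < 1" using pos assms by auto
  have pd: "0 < vx d" "vx d < 1" using pos assms by auto
  have ab: "vx a < vx b" and bc: "vx b < vx c" and cd: "vx c < vx d" using mono assms by auto
  define t0 where "t0 = (vx d + 1 + vx a) / 2"
  have t0: "vx d < t0" "t0 < 1 + vx a" using pa pd unfolding t0_def by auto
  have sabd: "(R a b d \<longrightarrow> E b d t0 < E a d t0 \<and> E a d t0 < E a b t0) \<and>
         (\<not> R a b d \<longrightarrow> E a b t0 < E a d t0 \<and> E a d t0 < E b d t0)"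
    using sortR[of a b d t0] assms t0 by auto
  have sacd: "(R a c d \<longrightarrow> E c d t0 < E a d t0 \<and> E a d t0 < E a c t0) \<and>
         (\<not> R a c d \<longrightarrow> E a c t0 < E a d t0 \<and> E a d t0 < E c d t0)"
    using sortR[of a c d t0] assms t0 by auto
  define f1 where "f1 = (\<lambda>s. E c d s - E b d s)"
  have lt1: "vx d < 1 + vx b" using pd pos[of b] assms by auto
  have cf1: "continuous_on {vx d..1 + vx b} f1" unfolding f1_def
    by (rule contdiff) (use assms ab bc cd in auto)
  have nf1: "\<forall>s\<in>{vx d<..<1 + vx b}. f1 s \<noteq> 0" unfolding f1_def
  proof
    fix s assume s: "s \<in> {vx d<..<1 + vx b}"
    show "E c d s - E b d s \<noteq> 0" using share_ne[of b d c d d s] assms s ab bc cd by auto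
  qed
  have rf1: "f1 (1 + vx b) \<noteq> 0" using end_ne[of b c d] endi[of b d] assms unfolding f1_def by auto
  have F1: "(f1 t0 > 0 \<longleftrightarrow> f1 (1 + vx b) > 0) \<and> (f1 t0 < 0 \<longleftrightarrow> f1 (1 + vx b) < 0)"
    by (rule sign_right[OF lt1 cf1 nf1 rf1]) (use t0 ab in auto)
  define f2 where "f2 = (\<lambda>s. E a b s - E a c s)"
  have lt2: "vx c < 1 + vx a" using pa pos[of c] assms by auto
  have cf2: "continuous_on {vx c..1 + vx a} f2" unfolding f2_def
    by (rule contdiff) (use assms ab bc cd in auto)
  have nf2: "\<forall>s\<in>{vx c<..<1 + vx a}. f2 s \<noteq> 0" unfolding f2_def
  proof
    fix s assume s: "s \<in> {vx c<..<1 + vx a}"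
    show "E a b s - E a c s \<noteq> 0" using share_ne[of a b a c a s] assms s ab bc cd by auto
  qed
  have lf2: "f2 (vx c) \<noteq> 0" using R_ne(1)[of a b c] endj[of a c] assms unfolding f2_def by auto
  have F2: "(f2 t0 > 0 \<longleftrightarrow> f2 (vx c) > 0) \<and> (f2 t0 < 0 \<longleftrightarrow> f2 (vx c) < 0)"
    by (rule sign_left[OF lt2 cf2 nf2 lf2]) (use t0 cd in auto)
  define f4 where "f4 = (\<lambda>s. E c d s - E a c s)"
  have lt4: "vx d < 1 + vx a" using pa pd by auto
  have cf4: "continuous_on {vx d..1 + vx a} f4" unfolding f4_def
    by (rule contdiff) (use assms ab bc cd pa in auto)
  have nf4: "\<forall>s\<in>{vx d<..<1 + vx a}. f4 s \<noteq> 0" unfolding f4_def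
  proof
    fix s assume s: "s \<in> {vx d<..<1 + vx a}"
    have "E a c s \<noteq> E c d s" using share_ne[of a c c d c s] assms s ab bc cd by auto
    thus "E c d s - E a c s \<noteq> 0" by auto
  qed
  have rf4: "f4 (1 + vx a) \<noteq> 0" using end_ne[of a c d] endi[of a c] assms unfolding f4_def by auto
  have F4: "(f4 t0 > 0 \<longleftrightarrow> f4 (1 + vx a) > 0) \<and> (f4 t0 < 0 \<longleftrightarrow> f4 (1 + vx a) < 0)"
    by (rule sign_right[OF lt4 cf4 nf4 rf4]) (use t0 in auto)
  have F3: "R a b d \<longleftrightarrow> vy d < E a b (vx d)" "\<not> R a b d \<longleftrightarrow> vy d > E a b (vx d)"
    using R_ne[of a b d] assms by auto
  have v1: "f1 (1 + vx b) = E c d (1 + vx b) - vy b" using endi[of b d] assms unfolding f1_def by simp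
  have v2: "f2 (vx c) = E a b (vx c) - vy c" using endj[of a c] assms unfolding f2_def by simp
  have v4: "f4 (1 + vx a) = E c d (1 + vx a) - vy a" using endi[of a c] assms unfolding f4_def by simp
  show ?thesis
  proof (rule ccontr)
    assume ne: "\<not> (R a b d \<longleftrightarrow> R a c d)"
    show False
    proof (cases "R a b d")
      case True
      hence nR: "\<not> R a c d" using ne by auto
      have "f1 t0 > 0" "f2 t0 > 0" "f4 t0 > 0" using sabd sacd True nR unfolding f1_def f2_def f4_def by auto
      hence "f1 (1 + vx b) > 0" "f2 (vx c) > 0" "f4 (1 + vx a) > 0" using F1 F2 F4 by auto
      hence p: "vy b - E c d (1 + vx b) < 0" "E a b (vx c) - vy c > 0" "E a b (vx d) - vy d > 0"
        "vy a - E c d (1 + vx a) < 0" using v1 v2 v4 F3 True by auto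
      show False
        by (rule two_cross[OF assms]) (use p in \<open>auto simp: mult_less_0_iff\<close>)
    next
      case False
      hence nR: "R a c d" using ne by auto
      have "f1 t0 < 0" "f2 t0 < 0" "f4 t0 < 0" using sabd sacd False nR unfolding f1_def f2_def f4_def by auto
      hence "f1 (1 + vx b) < 0" "f2 (vx c) < 0" "f4 (1 + vx a) < 0" using F1 F2 F4 by auto
      hence p: "vy b - E c d (1 + vx b) > 0" "E a b (vx c) - vy c < 0" "E a b (vx d) - vy d < 0"
        "vy a - E c d (1 + vx a) > 0" using v1 v2 v4 F3 False by auto
      show False
        by (rule two_cross[OF assms]) (use p in \<open>auto simp: mult_less_0_iff\<close>)
    qed
  qed
qed

lemma precR:
  assumes "1 \<le> i" "i < j" "j < k" "k \<le> n"
  shows "R i j k \<Longrightarrow> edge_prec vx E j k i j" "\<not> R i j k \<Longrightarrow> edge_prec vx E i j j k"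
proof -
  have pi: "0 < vx i" "vx i < 1" using pos assms by auto
  have pk: "0 < vx k" "vx k < 1" using pos assms by auto
  have ij: "vx i < vx j" and jk: "vx j < vx k" using mono assms by auto
  define g where "g = (\<lambda>s. E i j s - E j k s)"
  have lt: "vx k < 1 + vx i" using pi pk by auto
  have cg: "continuous_on {vx k..1 + vx i} g" unfolding g_def
    by (rule contdiff) (use assms ij jk pi in auto)
  have ng: "\<forall>s\<in>{vx k<..<1 + vx i}. g s \<noteq> 0" unfolding g_def
  proof
    fix s assume s: "s \<in> {vx k<..<1 + vx i}"
    show "E i j s - E j k s \<noteq> 0" using share_ne[of i j j k j s] assms s ij jk by auto
  qed
  have gk: "g (vx k) = E i j (vx k) - vy k" using endj[of j k] assms unfolding g_def by simp
  have g0: "g (vx k) \<noteq> 0" using R_ne(1)[of i j k] assms gk by auto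
  have RR: "R i j k \<longleftrightarrow> g (vx k) > 0" using R_ne(2)[of i j k] assms gk by auto
  have key: "\<forall>x \<in> edge_rint vx j k \<inter> edge_rint vx i j. edge_y vx E j k x \<noteq> edge_y vx E i j x \<and>
      (R i j k \<longrightarrow> edge_y vx E j k x < edge_y vx E i j x) \<and>
      (\<not> R i j k \<longrightarrow> edge_y vx E i j x < edge_y vx E j k x)"
  proof
    fix x assume x: "x \<in> edge_rint vx j k \<inter> edge_rint vx i j"
    define t where "t = (if x < vx i then x + 1 else x)"
    have xx: "0 \<le> x" "x < 1" "x < vx i \<or> vx k < x" using x ij jk unfolding edge_rint_def by auto
    have tt: "t \<in> {vx k..<1 + vx i}" using xx pk pi unfolding t_def by auto
    have ey: "edge_y vx E i j x = E i j t" "edge_y vx E j k x = E j k t"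
      using xx ij jk unfolding t_def edge_y_def by auto
    have "(g t > 0 \<longleftrightarrow> g (vx k) > 0) \<and> (g t < 0 \<longleftrightarrow> g (vx k) < 0)"
      by (rule sign_left[OF lt cg ng g0 tt])
    thus "edge_y vx E j k x \<noteq> edge_y vx E i j x \<and>
      (R i j k \<longrightarrow> edge_y vx E j k x < edge_y vx E i j x) \<and>
      (\<not> R i j k \<longrightarrow> edge_y vx E i j x < edge_y vx E j k x)"
      using RR g0 ey unfolding g_def by auto
  qed
  have z: "0 \<in> edge_rint vx j k \<inter> edge_rint vx i j" using pi ij unfolding edge_rint_def by auto
  have z2: "0 \<in> edge_rint vx i j \<inter> edge_rint vx j k" using z by auto
  show "R i j k \<Longrightarrow> edge_prec vx E j k i j"
    unfolding edge_prec_def edges_related_def using key z by (auto simp: less_imp_le)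
  show "\<not> R i j k \<Longrightarrow> edge_prec vx E i j j k"
  proof -
    assume nR: "\<not> R i j k"
    have key2: "\<forall>x \<in> edge_rint vx i j \<inter> edge_rint vx j k. edge_y vx E i j x < edge_y vx E j k x"
      using key nR by blast
    show ?thesis unfolding edge_prec_def edges_related_def using key2 z2
      by (auto simp: less_imp_le dest: less_imp_neq)
  qed
qed

lemma Vm_iff: "1 \<le> i \<Longrightarrow> i < j \<Longrightarrow> j < s \<Longrightarrow> s \<le> n \<Longrightarrow> s \<in> Vminus n vx vy E i j \<longleftrightarrow> R i j s"
proof -
  assume a: "1 \<le> i" "i < j" "j < s" "s \<le> n"
  have "vx j < vx s" "vx s < 1" "0 < vx s" using mono pos a by auto
  thus ?thesis using a unfolding Vminus_def R_def edge_rint_def by auto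
qed

lemma Vp_iff: "1 \<le> i \<Longrightarrow> i < j \<Longrightarrow> j < s \<Longrightarrow> s \<le> n \<Longrightarrow> s \<in> Vplus n vx vy E i j \<longleftrightarrow> \<not> R i j s"
proof -
  assume a: "1 \<le> i" "i < j" "j < s" "s \<le> n"
  have "vx j < vx s" "vx s < 1" "0 < vx s" using mono pos a by auto
  moreover have "vy s \<noteq> E i j (vx s)" using R_ne(1)[of i j s] a by auto
  moreover have "edge_y vx E i j (vx s) = E i j (vx s)" using \<open>vx j < vx s\<close> unfolding edge_y_def by auto
  ultimately show ?thesis using a unfolding Vplus_def R_def edge_rint_def by auto
qed

lemma Vp_sub: "Vplus n vx vy E i j \<subseteq> {j<..n}" unfolding Vplus_def by auto
lemma Vm_sub: "Vminus n vx vy E i j \<subseteq> {j<..n}" unfolding Vminus_def by auto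
lemma Vp_fin: "finite (Vplus n vx vy E i j)" using Vp_sub finite_subset by blast
lemma Vm_fin: "finite (Vminus n vx vy E i j)" using Vm_sub finite_subset by blast

lemma Vp_mono:
  assumes "1 \<le> a" "a < b" "b < c" "c \<le> n"
  shows "Vplus n vx vy E a c \<subseteq> Vplus n vx vy E a b"
proof
  fix s assume s: "s \<in> Vplus n vx vy E a c"
  have s1: "c < s" "s \<le> n" using s unfolding Vplus_def by auto
  have "\<not> R a c s" using Vp_iff[of a c s] s s1 assms by auto
  hence "\<not> R a b s" using A1[of a b c s] assms s1 by auto
  thus "s \<in> Vplus n vx vy E a b" using Vp_iff[of a b s] s1 assms by auto
qed

lemma Vm_mono:
  assumes "1 \<le> a" "a < b" "b < c" "c \<le> n"
  shows "Vminus n vx vy E a c \<subseteq> Vminus n vx vy E a b"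
proof
  fix s assume s: "s \<in> Vminus n vx vy E a c"
  have s1: "c < s" "s \<le> n" using s unfolding Vminus_def by auto
  have "R a c s" using Vm_iff[of a c s] s s1 assms by auto
  hence "R a b s" using A1[of a b c s] assms s1 by auto
  thus "s \<in> Vminus n vx vy E a b" using Vm_iff[of a b s] s1 assms by auto
qed

lemma main:
  assumes "n \<ge> 6"
  shows "(\<exists>i j. 1 \<le> i \<and> i < j \<and> j \<le> 6 \<and> separating n vx vy E i j) \<or>
         (\<exists>i j k. 1 \<le> i \<and> i < j \<and> j < k \<and> k \<le> 6 \<and> good_upper n vx vy E i j k) \<or>
         (\<exists>i j k. 1 \<le> i \<and> i < j \<and> j < k \<and> k \<le> 6 \<and> good_lower n vx vy E i j k)"
proof (rule ccontr)
  assume "\<not> ?thesis"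
  hence nS: "\<And>i j. 1 \<le> i \<Longrightarrow> i < j \<Longrightarrow> j \<le> 6 \<Longrightarrow> \<not> separating n vx vy E i j"
    and nU: "\<And>i j k. 1 \<le> i \<Longrightarrow> i < j \<Longrightarrow> j < k \<Longrightarrow> k \<le> 6 \<Longrightarrow> \<not> good_upper n vx vy E i j k"
    and nL: "\<And>i j k. 1 \<le> i \<Longrightarrow> i < j \<Longrightarrow> j < k \<Longrightarrow> k \<le> 6 \<Longrightarrow> \<not> good_lower n vx vy E i j k"
    by blast+
  define up where "up = (\<lambda>j k. card (Vplus n vx vy E j k) > 1)"
  define dn where "dn = (\<lambda>j k. card (Vminus n vx vy E j k) > 1)"
  have sep: "\<And>i j. 1 \<le> i \<Longrightarrow> i < j \<Longrightarrow> j \<le> 6 \<Longrightarrow> \<not> (up i j \<and> dn i j)"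
    using nS unfolding separating_def up_def dn_def by auto
  have TU: "\<And>i j k. 1 \<le> i \<Longrightarrow> i < j \<Longrightarrow> j < k \<Longrightarrow> k \<le> 6 \<Longrightarrow> R i j k \<Longrightarrow> up j k"
  proof -
    fix i j k assume a: "1 \<le> i" "i < j" "j < k" "k \<le> 6" "R i j k"
    have "edge_prec vx E j k i j" using precR(1)[of i j k] a assms by auto
    thus "up j k" using nU[of i j k] a unfolding good_upper_def up_def by auto
  qed
  have TL: "\<And>i j k. 1 \<le> i \<Longrightarrow> i < j \<Longrightarrow> j < k \<Longrightarrow> k \<le> 6 \<Longrightarrow> \<not> R i j k \<Longrightarrow> dn j k"
  proof -
    fix i j k assume a: "1 \<le> i" "i < j" "j < k" "k \<le> 6" "\<not> R i j k"
    have "edge_prec vx E i j j k" using precR(2)[of i j k] a assms by auto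
    thus "dn j k" using nL[of i j k] a unfolding good_lower_def dn_def by auto
  qed
  have m24u: "up 2 4 \<Longrightarrow> up 2 3" unfolding up_def
    using card_mono[OF Vp_fin Vp_mono[of 2 3 4]] assms by fastforce
  have m24d: "dn 2 4 \<Longrightarrow> dn 2 3" unfolding dn_def
    using card_mono[OF Vm_fin Vm_mono[of 2 3 4]] assms by fastforce
  have m25u: "up 2 5 \<Longrightarrow> up 2 3" unfolding up_def
    using card_mono[OF Vp_fin Vp_mono[of 2 3 5]] assms by fastforce
  have m25d: "dn 2 5 \<Longrightarrow> dn 2 3" unfolding dn_def
    using card_mono[OF Vm_fin Vm_mono[of 2 3 5]] assms by fastforce
  have a1: "R 1 2 4 \<longleftrightarrow> R 1 3 4" using A1[of 1 2 3 4] assms by auto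
  have a2: "R 2 3 5 \<longleftrightarrow> R 2 4 5" using A1[of 2 3 4 5] assms by auto
  have a3: "R 1 2 5 \<longleftrightarrow> R 1 4 5" using A1[of 1 2 4 5] assms by auto
  have s23: "\<not> (up 2 3 \<and> dn 2 3)" and s34: "\<not> (up 3 4 \<and> dn 3 4)" and s45: "\<not> (up 4 5 \<and> dn 4 5)"
    using sep by auto
  have r124: "R 1 2 4 \<longleftrightarrow> up 2 3"
    using TU[of 1 2 4] TL[of 1 2 4] m24u m24d s23 by auto
  have r125: "R 1 2 5 \<longleftrightarrow> up 2 3"
    using TU[of 1 2 5] TL[of 1 2 5] m25u m25d s23 by auto
  have r234: "R 2 3 4 \<longleftrightarrow> R 1 3 4"
    using TU[of 1 3 4] TL[of 1 3 4] TU[of 2 3 4] TL[of 2 3 4] s34 by auto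
  have r245: "R 2 4 5 \<longleftrightarrow> R 1 4 5"
    using TU[of 1 4 5] TL[of 1 4 5] TU[of 2 4 5] TL[of 2 4 5] s45 by auto
  have c4: "R 2 3 4 \<longleftrightarrow> up 2 3" using r124 a1 r234 by auto
  have c5: "R 2 3 5 \<longleftrightarrow> up 2 3" using r125 a3 r245 a2 by auto
  have sub2: "\<And>A :: nat set. finite A \<Longrightarrow> 4 \<in> A \<Longrightarrow> 5 \<in> A \<Longrightarrow> card A > (1::nat)"
  proof -
    fix A :: "nat set" assume "finite A" "4 \<in> A" "5 \<in> A"
    hence "card {4::nat, 5} \<le> card A" by (intro card_mono) auto
    thus "card A > 1" by simp
  qed
  show False
  proof (cases "up 2 3")
    case True
    hence "4 \<in> Vminus n vx vy E 2 3" "5 \<in> Vminus n vx vy E 2 3"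
      using c4 c5 Vm_iff[of 2 3 4] Vm_iff[of 2 3 5] assms by auto
    hence "dn 2 3" using sub2 Vm_fin unfolding dn_def by blast
    thus False using True s23 by auto
  next
    case False
    hence "4 \<in> Vplus n vx vy E 2 3" "5 \<in> Vplus n vx vy E 2 3"
      using c4 c5 Vp_iff[of 2 3 4] Vp_iff[of 2 3 5] assms by auto
    hence "up 2 3" using sub2 Vp_fin unfolding up_def by blast
    thus False using False by auto
  qed
qed

end

theorem claim16:
  fixes n :: nat and vx vy :: "nat \<Rightarrow> real" and E :: "nat \<Rightarrow> nat \<Rightarrow> real \<Rightarrow> real"
  assumes "is_flag n vx vy E" and "n \<ge> 6"
  shows "(\<exists>i j. 1 \<le> i \<and> i < j \<and> j \<le> 6 \<and> separating n vx vy E i j) \<or>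
         (\<exists>i j k. 1 \<le> i \<and> i < j \<and> j < k \<and> k \<le> 6 \<and> good_upper n vx vy E i j k) \<or>
         (\<exists>i j k. 1 \<le> i \<and> i < j \<and> j < k \<and> k \<le> 6 \<and> good_lower n vx vy E i j k)"
proof -
  interpret flag n vx vy E by unfold_locales (rule assms(1))
  show ?thesis using main[OF assms(2)] .
qed

end
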